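(* Let $T>0$ and ${\bf i}=(i_1,\dots,i_m)$ a reduced word for $w_0$. For every $\pi\in\mathcal C_0([0,T],\mathfrak a)$ the numbers $t_k=1/\int_0^Te^{-\alpha_{i_k}(e^{-\infty}_{s_{i_1}\cdots s_{i_{k-1}}}\pi(s))}ds$, $k=1,\dots,m$, are well defined and positive, so $\varrho^L_{\bf i}(\pi)=(t_1,\dots,t_m)\in\mathbb R_{>0}^m$. Moreover $\pi$ is determined by $(\varrho^L_{\bf i}(\pi),e^{-\infty}_{w_0}\pi)$: if $\pi,\pi'\in\mathcal C_0([0,T],\mathfrak a)$ satisfy $\varrho^L_{\bf i}(\pi)=\varrho^L_{\bf i}(\pi')$ and $e^{-\infty}_{w_0}\pi=e^{-\infty}_{w_0}\pi'$ on $[0,T)$, then $\pi=\pi'$.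
   Context: $\mathfrak a$ is the real Cartan subalgebra of a complex semisimple Lie algebra, $\Delta=\{\alpha_i\}$ the simple roots, $\alpha^\vee$ coroots, $W$ the Weyl group, $w_0$ its longest element. $\mathcal C_0([0,T],\mathfrak a)$: continuous paths with $\pi(0)=0$. For a continuous $\pi:[0,T)\to\mathfrak a$ and $\alpha\in\Delta$, $e^{-\infty}_\alpha\pi(t)=\pi(t)+\log\Big(1-\frac{\int_0^te^{-\alpha(\pi(s))}ds}{\int_0^Te^{-\alpha(\pi(s))}ds}\Big)\alpha^\vee$, $0\le t<T$ (with $e^{-\infty}_\alpha\pi=\pi$ if $\int_0^Te^{-\alpha(\pi)}=\infty$). For $w\in W$ with reduced expression $w=s_{j_1}\cdots s_{j_l}$, $e^{-\infty}_w=e^{-\infty}_{\alpha_{j_l}}\circ\cdots\circ e^{-\infty}_{\alpha_{j_1}}$ (independent of the reduced expression), $e^{-\infty}_e=\mathrm{id}$. *)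

theory Defs
  imports "HOL-Analysis.Analysis"
begin

text \<open>Root datum of a complex semisimple Lie algebra: the real Cartan subalgebra is a
  finite-dimensional real vector space 'a, simple roots are linear functionals
  alpha i (indexed by a finite type 'i), coroots are vectors cv i, and the matrix
  alpha i (cv j) is a generalized Cartan matrix whose Weyl group is finite
  (i.e. a Cartan matrix of finite type).\<close>

definition cartan_datum :: "('i::finite \<Rightarrow> 'a::euclidean_space \<Rightarrow> real) \<Rightarrow> ('i \<Rightarrow> 'a) \<Rightarrow> bool" where
  "cartan_datum \<alpha> cv \<longleftrightarrow>
     (\<forall>i. linear (\<alpha> i)) \<and>
     (\<forall>i. \<alpha> i (cv i) = 2) \<and>
     (\<forall>i j. i \<noteq> j \<longrightarrow> \<alpha> i (cv j) \<in> \<int> \<and> \<alpha> i (cv j) \<le> 0) \<and>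
     (\<forall>i j. \<alpha> i (cv j) = 0 \<longleftrightarrow> \<alpha> j (cv i) = 0) \<and>
     inj cv \<and> independent (range cv) \<and> span (range cv) = UNIV \<and>
     (\<forall>c::'i \<Rightarrow> real. (\<forall>x. (\<Sum>i\<in>UNIV. c i * \<alpha> i x) = 0) \<longrightarrow> (\<forall>i. c i = 0))"

definition sref :: "('i \<Rightarrow> 'a::real_vector \<Rightarrow> real) \<Rightarrow> ('i \<Rightarrow> 'a) \<Rightarrow> 'i \<Rightarrow> 'a \<Rightarrow> 'a" where
  "sref \<alpha> cv j x = x - \<alpha> j x *\<^sub>R cv j"

definition wprod :: "('i \<Rightarrow> 'a::real_vector \<Rightarrow> real) \<Rightarrow> ('i \<Rightarrow> 'a) \<Rightarrow> 'i list \<Rightarrow> 'a \<Rightarrow> 'a" where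
  "wprod \<alpha> cv ws = foldr (\<lambda>j f. sref \<alpha> cv j \<circ> f) ws id"

definition weyl_group :: "('i \<Rightarrow> 'a::real_vector \<Rightarrow> real) \<Rightarrow> ('i \<Rightarrow> 'a) \<Rightarrow> ('a \<Rightarrow> 'a) set" where
  "weyl_group \<alpha> cv = range (wprod \<alpha> cv)"

definition wlen :: "('i \<Rightarrow> 'a::real_vector \<Rightarrow> real) \<Rightarrow> ('i \<Rightarrow> 'a) \<Rightarrow> ('a \<Rightarrow> 'a) \<Rightarrow> nat" where
  "wlen \<alpha> cv w = (LEAST n. \<exists>ws. length ws = n \<and> wprod \<alpha> cv ws = w)"

text \<open>A reduced word for the longest element w0: a reduced word (length equals the
  Weyl length of its product) whose product has maximal length in W.\<close>
definition reduced_word_w0 :: "('i \<Rightarrow> 'a::real_vector \<Rightarrow> real) \<Rightarrow> ('i \<Rightarrow> 'a) \<Rightarrow> 'i list \<Rightarrow> bool" where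
  "reduced_word_w0 \<alpha> cv is \<longleftrightarrow>
     length is = wlen \<alpha> cv (wprod \<alpha> cv is) \<and>
     (\<forall>w\<in>weyl_group \<alpha> cv. wlen \<alpha> cv w \<le> length is)"

definition Dint :: "('i \<Rightarrow> 'a \<Rightarrow> real) \<Rightarrow> real \<Rightarrow> 'i \<Rightarrow> (real \<Rightarrow> 'a) \<Rightarrow> ennreal" where
  "Dint \<alpha> T j p = (\<integral>\<^sup>+ s. ennreal (indicator {0..<T} s * exp (- \<alpha> j (p s))) \<partial>lborel)"

text \<open>The operator e^{-infinity}_{alpha_j} on paths [0,T) -> a (values for t >= T irrelevant).\<close>
definition eminf :: "('i \<Rightarrow> 'a::real_vector \<Rightarrow> real) \<Rightarrow> ('i \<Rightarrow> 'a) \<Rightarrow> real \<Rightarrow> 'i \<Rightarrow> (real \<Rightarrow> 'a) \<Rightarrow> real \<Rightarrow> 'a" where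
  "eminf \<alpha> cv T j p = (\<lambda>t.
     if Dint \<alpha> T j p = \<infinity> then p t
     else p t + ln (1 - integral {0..t} (\<lambda>s. exp (- \<alpha> j (p s))) / enn2real (Dint \<alpha> T j p)) *\<^sub>R cv j)"

text \<open>e^{-infinity}_w for the word ws = [j1,...,jl] of w = s_{j1}...s_{jl}:
  e_{alpha_{jl}} o ... o e_{alpha_{j1}}.\<close>
definition epath :: "('i \<Rightarrow> 'a::real_vector \<Rightarrow> real) \<Rightarrow> ('i \<Rightarrow> 'a) \<Rightarrow> real \<Rightarrow> 'i list \<Rightarrow> (real \<Rightarrow> 'a) \<Rightarrow> real \<Rightarrow> 'a" where
  "epath \<alpha> cv T ws p = fold (eminf \<alpha> cv T) ws p"

text \<open>The k-th integral (k = 0..m-1, 0-based) and the map rho^L_i.\<close>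
definition Dk :: "('i \<Rightarrow> 'a::real_vector \<Rightarrow> real) \<Rightarrow> ('i \<Rightarrow> 'a) \<Rightarrow> real \<Rightarrow> 'i list \<Rightarrow> (real \<Rightarrow> 'a) \<Rightarrow> nat \<Rightarrow> ennreal" where
  "Dk \<alpha> cv T is p k = Dint \<alpha> T (is ! k) (epath \<alpha> cv T (take k is) p)"

definition rhoL :: "('i \<Rightarrow> 'a::real_vector \<Rightarrow> real) \<Rightarrow> ('i \<Rightarrow> 'a) \<Rightarrow> real \<Rightarrow> 'i list \<Rightarrow> (real \<Rightarrow> 'a) \<Rightarrow> real list" where
  "rhoL \<alpha> cv T is p = map (\<lambda>k. 1 / enn2real (Dk \<alpha> cv T is p k)) [0..<length is]"

end

theory Submission
  imports Defs
begin


lemma powr_int: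
  fixes a T t :: real
  assumes a: "a < 1" and t: "0 \<le> t" "t < T"
  shows "((\<lambda>s. (T - s) powr (-a)) has_integral (T - t) powr (1 - a) / (1 - a)) {t..<T}"
proof -
  define H where "H s = (-1 / (1 - a)) * (T - s) powr (1 - a)" for s
  have cont: "continuous_on {t..T} H"
    unfolding H_def using a
    by (intro continuous_intros continuous_on_powr') auto
  have der: "(H has_vector_derivative (T - s) powr (-a)) (at s)" if s: "s \<in> {t<..<T}" for s
  proof -
    have "T - s > 0" using s by simp
    have "((\<lambda>s. (T - s) powr (1 - a)) has_real_derivative (1 - a) * (T - s) powr (1 - a - 1) * (-1)) (at s)"
      using \<open>T - s > 0\<close> by (auto intro!: derivative_eq_intros)
    from DERIV_cmult[OF this, of "-1 / (1 - a)"]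
    have "(H has_real_derivative (-1 / (1 - a)) * ((1 - a) * (T - s) powr (1 - a - 1) * (-1))) (at s)"
      unfolding H_def .
    moreover have "(-1 / (1 - a)) * ((1 - a) * (T - s) powr (1 - a - 1) * (-1)) = (T - s) powr (-a)"
      using a by simp
    ultimately have "(H has_real_derivative (T - s) powr (-a)) (at s)" by simp
    then show ?thesis by (simp add: has_real_derivative_iff_has_vector_derivative)
  qed
  have "((\<lambda>s. (T - s) powr (-a)) has_integral (H T - H t)) {t..T}"
    using fundamental_theorem_of_calculus_interior[OF _ cont der] t by simp
  moreover have "H T - H t = (T - t) powr (1 - a) / (1 - a)" unfolding H_def by simp
  ultimately have "((\<lambda>s. (T - s) powr (-a)) has_integral (T - t) powr (1 - a) / (1 - a)) {t..T}" by simp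
  moreover have "{t..T} - {t..<T} = {T}" "{t..<T} - {t..T} = {}" using t by auto
  ultimately show ?thesis
    by (subst has_integral_spike_set_eq[where T="{t..T}"]) (auto intro: negligible_subset[of "{T}"])
qed

lemma cont_from_local:
  fixes F :: "real \<Rightarrow> 'b::topological_space"
  assumes "\<And>t. t \<in> {0..<T} \<Longrightarrow> \<exists>b. t < b \<and> b < T \<and> continuous_on {0..b} F"
  shows "continuous_on {0..<T} F"
  unfolding continuous_on_eq_continuous_within
proof
  fix t assume t: "t \<in> {0..<T}"
  obtain b where b: "t < b" "b < T" "continuous_on {0..b} F" using assms[OF t] by blast
  have "continuous (at t within {0..b}) F" using b(3) t b(1) by (simp add: continuous_on_eq_continuous_within)
  moreover have "at t within {0..<T} = at t within {0..b}"
  proof (rule at_within_nhd[where S="{..<b}"])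
    show "t \<in> {..<b}" using b by simp
    show "open {..<b}" by simp
    have "{0..<T} \<inter> {..<b} = {0..b} \<inter> {..<b}" using b by auto
    then show "{0..<T} \<inter> {..<b} - {t} = {0..b} \<inter> {..<b} - {t}" by simp
  qed
  ultimately show "continuous (at t within {0..<T}) F" by simp
qed

lemma step_int:
  fixes p :: "real \<Rightarrow> 'a::euclidean_space" and f :: "'a \<Rightarrow> real"
  assumes T: "0 < T" and lin: "linear f" and cont: "continuous_on {0..<T} p"
    and bnd: "\<forall>t\<in>{0..<T}. norm (p t - ln (T - t) *\<^sub>R \<mu>) \<le> B" and a: "f \<mu> < 1"
  shows "\<exists>D E. ((\<lambda>s. exp (- f (p s))) has_integral D) {0..<T} \<and> D > 0 \<and>
     (\<forall>t\<in>{0..<T}. integral {0..t} (\<lambda>s. exp (- f (p s))) < D) \<and>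
     (\<forall>t\<in>{0..<T}. \<bar>ln (1 - integral {0..t} (\<lambda>s. exp (- f (p s))) / D) - (1 - f \<mu>) * ln (T - t)\<bar> \<le> E)"
proof -
  define g where "g s = exp (- f (p s))" for s
  define h where "h s = (T - s) powr (- f \<mu>)" for s
  define a where "a = f \<mu>"
  have bl: "bounded_linear f" using lin linear_conv_bounded_linear by blast
  obtain K where K: "K > 0" "\<And>x. norm (f x) \<le> norm x * K" using bounded_linear.pos_bounded[OF bl] by blast
  have "norm (p 0 - ln (T - 0) *\<^sub>R \<mu>) \<le> B" using bnd T by (metis atLeastLessThan_iff order_refl)
  then have B0: "B \<ge> 0" using norm_ge_zero order_trans by blast
  define C where "C = B * K"
  have C0: "C \<ge> 0" using B0 K unfolding C_def by simp
  have gh: "exp (- C) * h s \<le> g s \<and> g s \<le> exp C * h s" if s: "s \<in> {0..<T}" for s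
  proof -
    define e where "e = p s - ln (T - s) *\<^sub>R \<mu>"
    have fe: "\<bar>f e\<bar> \<le> C"
    proof -
      have "\<bar>f e\<bar> \<le> norm e * K" using K(2)[of e] by simp
      also have "\<dots> \<le> B * K" using bnd s K(1) unfolding e_def by (simp add: mult_right_mono)
      finally show ?thesis unfolding C_def .
    qed
    have "f (p s) = f e + ln (T - s) * a" unfolding e_def a_def
      using linear_diff[OF lin] linear_scale[OF lin] by simp
    moreover have "h s = exp (- a * ln (T - s))" using s unfolding h_def a_def powr_def by simp
    ultimately have "g s = exp (- f e) * h s"
      unfolding g_def by (simp add: exp_add[symmetric] algebra_simps)
    moreover have "exp (- C) \<le> exp (- f e)" "exp (- f e) \<le> exp C" using fe by auto
    moreover have "h s \<ge> 0" unfolding h_def by simp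
    ultimately show ?thesis by (simp add: mult_right_mono)
  qed
  have gpos: "g s > 0" for s unfolding g_def by simp
  have contg: "continuous_on {0..<T} g"
    unfolding g_def by (intro continuous_intros continuous_on_compose2[OF linear_continuous_on[OF bl] cont]) auto
  define hi where "hi t = (T - t) powr (1 - a) / (1 - a)" for t
  have hint: "(h has_integral hi t) {t..<T}" if "0 \<le> t" "t < T" for t
    unfolding h_def hi_def a_def using powr_int[OF a that] by simp
  have hipos: "hi t > 0" if "t < T" for t using that a unfolding hi_def a_def by simp
  have gint: "g integrable_on {t..<T}" if t: "0 \<le> t" "t < T" for t
  proof (rule measurable_bounded_by_integrable_imp_integrable_real)
    show "g \<in> borel_measurable (lebesgue_on {t..<T})"
      by (rule continuous_imp_measurable_on_sets_lebesgue) (use contg t in \<open>auto intro: continuous_on_subset\<close>)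
    show "(\<lambda>s. exp C * h s) integrable_on {t..<T}"
      using has_integral_mult_right[OF hint[OF t], of "exp C"] by blast
    show "\<bar>g x\<bar> \<le> exp C * h x" if "x \<in> {t..<T}" for x using gh[of x] gpos[of x] that t by auto
  qed auto
  define I where "I t = integral {t..<T} g" for t
  have Ib: "exp (- C) * hi t \<le> I t \<and> I t \<le> exp C * hi t" if t: "0 \<le> t" "t < T" for t
  proof
    show "exp (- C) * hi t \<le> I t" unfolding I_def
      by (rule has_integral_le[OF has_integral_mult_right[OF hint[OF t]] gint[OF t, unfolded has_integral_integral]])
         (use gh t in auto)
    show "I t \<le> exp C * hi t" unfolding I_def
      by (rule has_integral_le[OF gint[OF t, unfolded has_integral_integral] has_integral_mult_right[OF hint[OF t]]])
         (use gh t in auto)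
  qed
  have Ipos: "I t > 0" if "0 \<le> t" "t < T" for t
  proof -
    have "exp (- C) * hi t > 0" using hipos[of t] that by simp
    then show ?thesis using Ib[OF that] by linarith
  qed
  define D where "D = I 0"
  have Dint: "(g has_integral D) {0..<T}" unfolding D_def I_def using gint[of 0] T by auto
  have split: "integral {0..t} g + I t = D" if t: "0 \<le> t" "t < T" for t
  proof -
    have "continuous_on {0..t} g" by (rule continuous_on_subset[OF contg]) (use t in auto)
    then have g1: "(g has_integral integral {0..t} g) {0..t}"
      using integrable_continuous_interval by blast
    have g2: "(g has_integral I t) {t..<T}" unfolding I_def using gint[OF t] by auto
    have "(g has_integral (integral {0..t} g + I t)) ({0..t} \<union> {t..<T})"
      by (rule has_integral_Un[OF g1 g2]) (use t in \<open>auto intro: negligible_subset[of "{t}"]\<close>)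
    moreover have "{0..t} \<union> {t..<T} = {0..<T}" using t by auto
    ultimately have "(g has_integral (integral {0..t} g + I t)) {0..<T}" by simp
    then show ?thesis using Dint by (rule has_integral_unique)
  qed
  have Dpos: "D > 0" unfolding D_def using Ipos T by simp
  define E where "E = C + \<bar>ln (1 - a)\<bar> + \<bar>ln D\<bar>"
  show ?thesis
  proof (intro exI conjI ballI)
    show "((\<lambda>s. exp (- f (p s))) has_integral D) {0..<T}" using Dint unfolding g_def .
    show "D > 0" by (rule Dpos)
  next
    fix t assume t: "t \<in> {0..<T}"
    show "integral {0..t} (\<lambda>s. exp (- f (p s))) < D" using split[of t] Ipos[of t] t unfolding g_def by auto
  next
    fix t assume t: "t \<in> {0..<T}"
    have eq: "1 - integral {0..t} g / D = I t / D" using split[of t] t Dpos by (auto simp: field_simps)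
    have It: "I t > 0" using Ipos t by auto
    have lnhi: "ln (hi t) = (1 - a) * ln (T - t) - ln (1 - a)"
      using t a unfolding hi_def a_def by (simp add: ln_div ln_powr)
    have l1: "ln (I t) \<le> C + ln (hi t)"
    proof -
      have "ln (I t) \<le> ln (exp C * hi t)" using Ib[of t] t It hipos[of t] by auto
      then show ?thesis using hipos[of t] t by (simp add: ln_mult)
    qed
    have l2: "-C + ln (hi t) \<le> ln (I t)"
    proof -
      have "ln (exp (-C) * hi t) \<le> ln (I t)" using Ib[of t] t It hipos[of t] by auto
      then show ?thesis using hipos[of t] t by (simp add: ln_mult)
    qed
    have "ln (1 - integral {0..t} g / D) = ln (I t) - ln D" using eq It Dpos by (simp add: ln_div)
    then show "\<bar>ln (1 - integral {0..t} (\<lambda>s. exp (- f (p s))) / D) - (1 - f \<mu>) * ln (T - t)\<bar> \<le> E"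
      unfolding E_def using l1 l2 lnhi unfolding g_def a_def by linarith
  qed
qed

lemma step_path:
  fixes \<alpha> :: "'i \<Rightarrow> 'a::euclidean_space \<Rightarrow> real" and cv :: "'i \<Rightarrow> 'a" and p :: "real \<Rightarrow> 'a"
  assumes T: "0 < T" and lin: "linear (\<alpha> j)" and cont: "continuous_on {0..<T} p"
    and bnd: "\<forall>t\<in>{0..<T}. norm (p t - ln (T - t) *\<^sub>R \<mu>) \<le> B" and a: "\<alpha> j \<mu> < 1"
  shows "\<exists>D. D > 0 \<and> Dint \<alpha> T j p = ennreal D \<and>
      (\<forall>t\<in>{0..<T}. integral {0..t} (\<lambda>s. exp (- \<alpha> j (p s))) < D) \<and>
      continuous_on {0..<T} (eminf \<alpha> cv T j p) \<and>
      (\<exists>B'. \<forall>t\<in>{0..<T}. norm (eminf \<alpha> cv T j p t - ln (T - t) *\<^sub>R (\<mu> + (1 - \<alpha> j \<mu>) *\<^sub>R cv j)) \<le> B')"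
proof -
  define g where "g s = exp (- \<alpha> j (p s))" for s
  obtain D E where hD: "(g has_integral D) {0..<T}" and D0: "D > 0"
    and FD: "\<forall>t\<in>{0..<T}. integral {0..t} g < D"
    and lnb: "\<forall>t\<in>{0..<T}. \<bar>ln (1 - integral {0..t} g / D) - (1 - \<alpha> j \<mu>) * ln (T - t)\<bar> \<le> E"
    using step_int[OF T lin cont bnd a] unfolding g_def by blast
  have Dint: "Dint \<alpha> T j p = ennreal D"
    unfolding Dint_def using nn_integral_has_integral_lebesgue[OF _ hD] unfolding g_def by simp
  define F where "F t = integral {0..t} g" for t
  have em: "eminf \<alpha> cv T j p t = p t + ln (1 - F t / D) *\<^sub>R cv j" for t
    unfolding eminf_def Dint F_def g_def using D0 by simp
  have bl: "bounded_linear (\<alpha> j)" using lin linear_conv_bounded_linear by blast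
  have contg: "continuous_on {0..<T} g"
    unfolding g_def by (intro continuous_intros continuous_on_compose2[OF linear_continuous_on[OF bl] cont]) auto
  have contF: "continuous_on {0..<T} F"
  proof (rule cont_from_local)
    fix t assume t: "t \<in> {0..<T}"
    define b where "b = (t + T) / 2"
    have b: "t < b" "b < T" using t unfolding b_def by auto
    have "continuous_on {0..b} g" by (rule continuous_on_subset[OF contg]) (use b in auto)
    then have "continuous_on {0..b} F" unfolding F_def
      by (intro indefinite_integral_continuous_1 integrable_continuous_interval)
    then show "\<exists>b. t < b \<and> b < T \<and> continuous_on {0..b} F" using b by blast
  qed
  have pos: "\<forall>t\<in>{0..<T}. 1 - F t / D > 0" using FD D0 unfolding F_def by simp
  have cont_em: "continuous_on {0..<T} (eminf \<alpha> cv T j p)"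
    unfolding em using pos D0 by (intro continuous_intros cont contF) auto
  have bd: "norm (eminf \<alpha> cv T j p t - ln (T - t) *\<^sub>R (\<mu> + (1 - \<alpha> j \<mu>) *\<^sub>R cv j)) \<le> B + E * norm (cv j)"
    if t: "t \<in> {0..<T}" for t
  proof -
    have "eminf \<alpha> cv T j p t - ln (T - t) *\<^sub>R (\<mu> + (1 - \<alpha> j \<mu>) *\<^sub>R cv j)
        = (p t - ln (T - t) *\<^sub>R \<mu>) + (ln (1 - F t / D) - (1 - \<alpha> j \<mu>) * ln (T - t)) *\<^sub>R cv j"
      unfolding em by (simp add: algebra_simps)
    also have "norm \<dots> \<le> norm (p t - ln (T - t) *\<^sub>R \<mu>) + norm ((ln (1 - F t / D) - (1 - \<alpha> j \<mu>) * ln (T - t)) *\<^sub>R cv j)"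
      by (rule norm_triangle_ineq)
    also have "\<dots> \<le> B + E * norm (cv j)"
    proof (rule add_mono)
      show "norm (p t - ln (T - t) *\<^sub>R \<mu>) \<le> B" using bnd t by blast
      have "\<bar>ln (1 - F t / D) - (1 - \<alpha> j \<mu>) * ln (T - t)\<bar> \<le> E" using lnb t unfolding F_def by blast
      then show "norm ((ln (1 - F t / D) - (1 - \<alpha> j \<mu>) * ln (T - t)) *\<^sub>R cv j) \<le> E * norm (cv j)"
        by (simp add: mult_right_mono)
    qed
    finally show ?thesis .
  qed
  show ?thesis
    using D0 Dint FD cont_em bd unfolding g_def by blast
qed

lemma inv_deriv:
  fixes \<alpha> :: "'i \<Rightarrow> 'a::euclidean_space \<Rightarrow> real" and p :: "real \<Rightarrow> 'a"
  assumes lin: "linear (\<alpha> j)" and cp: "continuous_on {0..<T} p" and D0: "D > 0"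
    and Fp: "\<forall>t\<in>{0..<T}. integral {0..t} (\<lambda>s. exp (- \<alpha> j (p s))) < D"
    and t0: "t0 \<in> {0..<T}" and x: "x \<in> {0..t0}"
  shows "((\<lambda>x. inverse (1 - integral {0..x} (\<lambda>s. exp (- \<alpha> j (p s))) / D)) has_field_derivative
     exp (- (\<alpha> j (p x) + 2 * ln (1 - integral {0..x} (\<lambda>s. exp (- \<alpha> j (p s))) / D))) / D) (at x within {0..t0})"
proof -
  define g where "g s = exp (- \<alpha> j (p s))" for s
  define u where "u x = 1 - integral {0..x} g / D" for x
  have bl: "bounded_linear (\<alpha> j)" using lin linear_conv_bounded_linear by blast
  have contg: "continuous_on {0..<T} g"
    unfolding g_def by (intro continuous_intros continuous_on_compose2[OF linear_continuous_on[OF bl] cp]) auto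
  have cg: "continuous_on {0..t0} g" by (rule continuous_on_subset[OF contg]) (use t0 in auto)
  have "((\<lambda>u. integral {0..u} g) has_vector_derivative g x) (at x within {0..t0})"
    by (rule integral_has_vector_derivative[OF cg x])
  then have dF: "((\<lambda>u. integral {0..u} g) has_field_derivative g x) (at x within {0..t0})"
    by (simp add: has_real_derivative_iff_has_vector_derivative)
  have du: "(u has_field_derivative (- g x / D)) (at x within {0..t0})"
    unfolding u_def using dF D0 by (auto intro!: derivative_eq_intros)
  have ux: "u x > 0" using Fp t0 x D0 unfolding u_def g_def by auto
  have "((\<lambda>x. inverse (u x)) has_field_derivative - (inverse (u x) * (- g x / D) * inverse (u x))) (at x within {0..t0})"
    using DERIV_inverse'[OF du] ux by simp
  moreover have "- (inverse (u x) * (- g x / D) * inverse (u x)) = exp (- (\<alpha> j (p x) + 2 * ln (u x))) / D"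
  proof -
    have m: "- (\<alpha> j (p x) + 2 * ln (u x)) = - \<alpha> j (p x) - 2 * ln (u x)" by simp
    have e2: "exp (2 * ln (u x)) = u x * u x" using ux by (simp only: mult_2 exp_add exp_ln)
    have "exp (- (\<alpha> j (p x) + 2 * ln (u x))) = g x / (u x * u x)"
      unfolding m exp_diff e2 g_def ..
    then show ?thesis using ux D0 by (simp add: field_simps)
  qed
  ultimately have "((\<lambda>x. inverse (u x)) has_field_derivative exp (- (\<alpha> j (p x) + 2 * ln (u x))) / D) (at x within {0..t0})"
    by (rule DERIV_cong)
  then show ?thesis by (simp only: u_def g_def[abs_def])
qed

lemma inv_step:
  fixes \<alpha> :: "'i \<Rightarrow> 'a::euclidean_space \<Rightarrow> real" and cv :: "'i \<Rightarrow> 'a" and p p' :: "real \<Rightarrow> 'a"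
  assumes lin: "linear (\<alpha> j)" and ajj: "\<alpha> j (cv j) = 2"
    and cp: "continuous_on {0..<T} p" and cp': "continuous_on {0..<T} p'" and D0: "D > 0"
    and Dp: "Dint \<alpha> T j p = ennreal D" and Dp': "Dint \<alpha> T j p' = ennreal D"
    and Fp: "\<forall>t\<in>{0..<T}. integral {0..t} (\<lambda>s. exp (- \<alpha> j (p s))) < D"
    and Fp': "\<forall>t\<in>{0..<T}. integral {0..t} (\<lambda>s. exp (- \<alpha> j (p' s))) < D"
    and eq: "\<forall>t\<in>{0..<T}. eminf \<alpha> cv T j p t = eminf \<alpha> cv T j p' t"
  shows "\<forall>t\<in>{0..<T}. p t = p' t"
proof
  fix t0 assume t0: "t0 \<in> {0..<T}"
  define u where "u x = 1 - integral {0..x} (\<lambda>s. exp (- \<alpha> j (p s))) / D" for x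
  define u' where "u' x = 1 - integral {0..x} (\<lambda>s. exp (- \<alpha> j (p' s))) / D" for x
  have em: "eminf \<alpha> cv T j p x = p x + ln (u x) *\<^sub>R cv j" for x
    unfolding eminf_def Dp u_def using D0 by simp
  have em': "eminf \<alpha> cv T j p' x = p' x + ln (u' x) *\<^sub>R cv j" for x
    unfolding eminf_def Dp' u'_def using D0 by simp
  have E1: "p x + ln (u x) *\<^sub>R cv j = p' x + ln (u' x) *\<^sub>R cv j" if "x \<in> {0..<T}" for x
  proof -
    have "eminf \<alpha> cv T j p x = eminf \<alpha> cv T j p' x" using eq that by blast
    then show ?thesis by (simp only: em em')
  qed
  have Q: "\<alpha> j (p x) + 2 * ln (u x) = \<alpha> j (p' x) + 2 * ln (u' x)" if "x \<in> {0..<T}" for x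
  proof -
    have "\<alpha> j (p x + ln (u x) *\<^sub>R cv j) = \<alpha> j (p' x + ln (u' x) *\<^sub>R cv j)" using E1[OF that] by simp
    then show ?thesis using linear_add[OF lin] linear_scale[OF lin] ajj by (simp add: algebra_simps)
  qed
  have "\<exists>c. \<forall>x\<in>{0..t0}. inverse (u x) - inverse (u' x) = c"
  proof (rule has_field_derivative_zero_constant)
    show "convex {0..t0}" by simp
    fix x assume x: "x \<in> {0..t0}"
    have xT: "x \<in> {0..<T}" using x t0 by auto
    have d1: "((\<lambda>x. inverse (u x)) has_field_derivative exp (- (\<alpha> j (p x) + 2 * ln (u x))) / D) (at x within {0..t0})"
      unfolding u_def by (rule inv_deriv[where \<alpha>=\<alpha> and j=j and p=p, OF lin cp D0 Fp t0 x])
    have d2: "((\<lambda>x. inverse (u' x)) has_field_derivative exp (- (\<alpha> j (p' x) + 2 * ln (u' x))) / D) (at x within {0..t0})"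
      unfolding u'_def by (rule inv_deriv[where \<alpha>=\<alpha> and j=j and p=p', OF lin cp' D0 Fp' t0 x])
    show "((\<lambda>x. inverse (u x) - inverse (u' x)) has_field_derivative 0) (at x within {0..t0})"
      using DERIV_diff[OF d1 d2] Q[OF xT] by simp
  qed
  then obtain c where c: "\<forall>x\<in>{0..t0}. inverse (u x) - inverse (u' x) = c" by blast
  have "u 0 = 1" "u' 0 = 1" unfolding u_def u'_def by simp_all
  moreover have "inverse (u 0) - inverse (u' 0) = c" using c t0 by simp
  ultimately have "c = 0" by simp
  then have "inverse (u t0) = inverse (u' t0)" using c t0 by auto
  then have "u t0 = u' t0" by simp
  then show "p t0 = p' t0" using E1[OF t0] by simp
qed




fun alt :: "'i \<Rightarrow> 'i \<Rightarrow> nat \<Rightarrow> 'i list" where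
  "alt i j 0 = []"
| "alt i j (Suc k) = i # alt j i k"

lemma alt_len[simp]: "length (alt i j k) = k"
  by (induction k arbitrary: i j) auto
lemma alt_set: "set (alt i j k) \<subseteq> {i,j}"
  by (induction k arbitrary: i j) auto
lemma take_alt: "m \<le> k \<Longrightarrow> take m (alt i j k) = alt i j m"
proof (induction m arbitrary: i j k)
  case 0 then show ?case by simp
next
  case (Suc m) then show ?case by (cases k) auto
qed

fun pq :: "real \<Rightarrow> real \<Rightarrow> nat \<Rightarrow> real \<times> real" where
  "pq A B 0 = (1,0)"
| "pq A B (Suc k) = (let p = fst (pq A B k); q = snd (pq A B k); q' = -q - p*B in (-p - q'*A, q'))"

lemma snd_pq_Suc: "snd (pq A B (Suc k)) = -snd(pq A B k) - fst(pq A B k)*B" by (simp add: Let_def)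

lemma pq_inv:
  assumes "A \<le> 0" "B \<le> 0" "A * B \<ge> 4"
  shows "snd (pq A B k) \<ge> 0 \<and> -B * fst (pq A B k) > 2 * snd (pq A B k) \<and> snd (pq A B (Suc k)) > snd (pq A B k)"
proof (induction k)
  case 0
  have "B \<noteq> 0" using assms by auto
  then show ?case using assms by (simp add: Let_def)
next
  case (Suc k)
  define p where "p = fst (pq A B k)"
  define q where "q = snd (pq A B k)"
  define q' where "q' = -q - p*B"
  define p' where "p' = -p - q'*A"
  have h: "q \<ge> 0" "-B * p > 2*q" using Suc p_def q_def by auto
  have q'q: "q' > q" "q' \<ge> 0" using h q'_def mult.commute[of B p] by auto
  have e1: "pq A B (Suc k) = (p', q')" by (simp add: Let_def p_def q_def q'_def p'_def)
  have "-B * p' = -(q' + q) + (A*B) * q'" unfolding p'_def q'_def by (simp add: algebra_simps)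
  moreover have "(A*B - 4) * q' \<ge> 0" using assms q'q by simp
  ultimately have inv2: "-B * p' > 2 * q'" using q'q by (simp add: algebra_simps)
  have "snd (pq A B (Suc (Suc k))) = -q' - p'*B" using e1 by (simp only: snd_pq_Suc[of A B "Suc k"] fst_conv snd_conv)
  then have "snd (pq A B (Suc (Suc k))) > q'" using inv2 mult.commute[of B p'] by linarith
  then show ?case using e1 q'q inv2 by simp
qed

lemma alt_form:
  "set xs \<subseteq> {i,j} \<Longrightarrow> i \<noteq> j \<Longrightarrow> (\<forall>k. Suc k < length xs \<longrightarrow> xs!k \<noteq> xs!Suc k)
   \<Longrightarrow> (xs \<noteq> [] \<longrightarrow> hd xs = i) \<Longrightarrow> xs = alt i j (length xs)"
proof (induction xs arbitrary: i j)
  case Nil then show ?case by simp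
next
  case (Cons x xs)
  have xi: "x = i" using Cons.prems by simp
  have alt': "\<forall>k. Suc k < length xs \<longrightarrow> xs!k \<noteq> xs!Suc k"
  proof (intro allI impI)
    fix k assume "Suc k < length xs"
    then show "xs!k \<noteq> xs!Suc k" using Cons.prems(3) by (auto dest: spec[of _ "Suc k"])
  qed
  have hd': "xs \<noteq> [] \<longrightarrow> hd xs = j"
  proof
    assume ne: "xs \<noteq> []"
    then have "hd xs \<noteq> x" using Cons.prems(3) by (auto dest: spec[of _ 0] simp: hd_conv_nth)
    moreover have "hd xs \<in> {i,j}" using ne Cons.prems(1) by (auto dest: hd_in_set)
    ultimately show "hd xs = j" using xi by auto
  qed
  have "xs = alt j i (length xs)"
    by (rule Cons.IH) (use Cons.prems alt' hd' in auto)
  then show ?case using xi by simp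
qed

locale cdat =
  fixes \<alpha> :: "'i::finite \<Rightarrow> 'a::euclidean_space \<Rightarrow> real" and cv :: "'i \<Rightarrow> 'a"
  assumes cd: "cartan_datum \<alpha> cv" and finW: "finite (weyl_group \<alpha> cv)"
begin

abbreviation s where "s \<equiv> sref \<alpha> cv"
abbreviation wp where "wp \<equiv> wprod \<alpha> cv"
abbreviation wl where "wl \<equiv> wlen \<alpha> cv"

lemma lin: "linear (\<alpha> i)" using cd by (simp add: cartan_datum_def)
lemma a_diff: "\<alpha> i (x - y) = \<alpha> i x - \<alpha> i y" using lin by (rule linear_diff)
lemma a_add: "\<alpha> i (x + y) = \<alpha> i x + \<alpha> i y" using lin by (rule linear_add)
lemma a_scale: "\<alpha> i (c *\<^sub>R x) = c * \<alpha> i x" using linear_scale[OF lin] by simp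
lemma a_zero: "\<alpha> i 0 = 0" using lin by (rule linear_0)
lemma a_ii: "\<alpha> i (cv i) = 2" using cd by (simp add: cartan_datum_def)

lemma s_s[simp]: "s j (s j x) = x"
  by (simp add: sref_def a_diff a_scale a_ii algebra_simps)

lemma wp_Nil[simp]: "wp [] = id" by (simp add: wprod_def)
lemma wp_Cons[simp]: "wp (j # ws) = s j \<circ> wp ws" by (simp add: wprod_def)
lemma wp_append: "wp (xs @ ys) = wp xs \<circ> wp ys"
  by (induction xs) auto
lemma wp_rev_inv[simp]: "wp (rev ws) (wp ws x) = x"
  by (induction ws arbitrary: x) (auto simp: wp_append)
lemma wp_inv_rev[simp]: "wp ws (wp (rev ws) x) = x"
  using wp_rev_inv[of "rev ws"] by simp

lemma wl_le: "wl (wp ws) \<le> length ws"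
  unfolding wlen_def by (rule Least_le) auto
lemma wl_ex: "\<exists>zs. length zs = wl (wp ws) \<and> wp zs = wp ws"
  unfolding wlen_def by (rule LeastI_ex) auto

lemma wl_rev: "wl (wp (rev ws)) = wl (wp ws)"
proof -
  have *: "wl (wp (rev ws)) \<le> wl (wp ws)" for ws
  proof -
    obtain zs where z: "length zs = wl (wp ws)" "wp zs = wp ws" using wl_ex by blast
    have "wp (rev zs) = wp (rev ws)"
    proof
      fix x
      have "wp (rev zs) x = wp (rev zs) (wp ws (wp (rev ws) x))" by simp
      also have "\<dots> = wp (rev ws) x" using z(2)[symmetric] by simp
      finally show "wp (rev zs) x = wp (rev ws) x" .
    qed
    then show ?thesis using wl_le[of "rev zs"] z(1) by simp
  qed
  show ?thesis using *[of ws] *[of "rev ws"] by simp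
qed

lemma a_s: "\<alpha> k (s i y) = \<alpha> k y - \<alpha> i y * \<alpha> k (cv i)"
  by (simp add: sref_def a_diff a_scale)

fun dc :: "'i \<Rightarrow> 'i \<Rightarrow> real \<times> real \<Rightarrow> 'i list \<Rightarrow> real \<times> real" where
  "dc i j pr [] = pr"
| "dc i j (p,q) (k # ks) = dc i j (if k = i then (-p - q * \<alpha> j (cv i), q) else (p, -q - p * \<alpha> i (cv j))) ks"

lemma dc_lemma:
  assumes "i \<noteq> j" "set ks \<subseteq> {i,j}"
  shows "p * \<alpha> i (wp ks x) + q * \<alpha> j (wp ks x) = fst (dc i j (p,q) ks) * \<alpha> i x + snd (dc i j (p,q) ks) * \<alpha> j x"
  using assms(2)
proof (induction ks arbitrary: p q)
  case Nil then show ?case by simp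
next
  case (Cons k ks)
  then have k: "k = i \<or> k = j" and ks: "set ks \<subseteq> {i,j}" by auto
  show ?case
  proof (cases "k = i")
    case True
    have "p * \<alpha> i (wp (k # ks) x) + q * \<alpha> j (wp (k # ks) x)
        = (-p - q * \<alpha> j (cv i)) * \<alpha> i (wp ks x) + q * \<alpha> j (wp ks x)"
      using True by (simp add: a_s a_ii algebra_simps)
    also have "\<dots> = fst (dc i j (-p - q * \<alpha> j (cv i), q) ks) * \<alpha> i x + snd (dc i j (-p - q * \<alpha> j (cv i), q) ks) * \<alpha> j x" by (rule Cons.IH[OF ks])
    finally show ?thesis using True by simp
  next
    case False
    then have kj: "k = j" using k by auto
    have "p * \<alpha> i (wp (k # ks) x) + q * \<alpha> j (wp (k # ks) x)
        = p * \<alpha> i (wp ks x) + (-q - p * \<alpha> i (cv j)) * \<alpha> j (wp ks x)"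
      using kj by (simp add: a_s a_ii algebra_simps)
    also have "\<dots> = fst (dc i j (p, -q - p * \<alpha> i (cv j)) ks) * \<alpha> i x + snd (dc i j (p, -q - p * \<alpha> i (cv j)) ks) * \<alpha> j x" by (rule Cons.IH[OF ks])
    finally show ?thesis using False by simp
  qed
qed

lemma sc2: "(p * 2) *\<^sub>R v = p *\<^sub>R v + p *\<^sub>R (v::'a)" by (metis mult_2_right scaleR_add_left)
lemma sc2': "(2 * p) *\<^sub>R v = p *\<^sub>R v + p *\<^sub>R (v::'a)" by (metis mult_2 scaleR_add_left)

fun vc :: "'i \<Rightarrow> 'i \<Rightarrow> 'a \<Rightarrow> 'i list \<Rightarrow> real \<times> real" where
  "vc i j x [] = (0,0)"
| "vc i j x (k # ks) = (let (p,q) = vc i j x ks in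
     if k = i then (-p - \<alpha> i x - q * \<alpha> i (cv j), q) else (p, -q - \<alpha> j x - p * \<alpha> j (cv i)))"

lemma vc_lemma:
  assumes "i \<noteq> j" "set ks \<subseteq> {i,j}"
  shows "wp ks x = x + fst (vc i j x ks) *\<^sub>R cv i + snd (vc i j x ks) *\<^sub>R cv j"
  using assms(2)
proof (induction ks)
  case Nil then show ?case by simp
next
  case (Cons k ks)
  then have k: "k = i \<or> k = j" and ks: "set ks \<subseteq> {i,j}" by auto
  obtain p q where pq: "vc i j x ks = (p,q)" by fastforce
  have IH: "wp ks x = x + p *\<^sub>R cv i + q *\<^sub>R cv j" using Cons.IH[OF ks] pq by simp
  show ?case
  proof (cases "k = i")
    case True
    show ?thesis using True IH pq
      by (simp add: sref_def a_add a_scale a_ii algebra_simps sc2 sc2')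
  next
    case False
    then have kj: "k = j" using k by auto
    show ?thesis using False kj IH pq assms(1)
      by (simp add: sref_def a_add a_scale a_ii algebra_simps sc2 sc2')
  qed
qed

lemma cv_inj: "inj cv" using cd by (simp add: cartan_datum_def)
lemma cv_indep: "independent (range cv)" using cd by (simp add: cartan_datum_def)

lemma coeff_unique:
  assumes "i \<noteq> j" "p *\<^sub>R cv i + q *\<^sub>R cv j = p' *\<^sub>R cv i + q' *\<^sub>R cv j"
  shows "q = q'"
proof (rule ccontr)
  assume "q \<noteq> q'"
  have "(q - q') *\<^sub>R cv j - (p' - p) *\<^sub>R cv i = (p *\<^sub>R cv i + q *\<^sub>R cv j) - (p' *\<^sub>R cv i + q' *\<^sub>R cv j)"
    by (simp add: algebra_simps)
  also have "\<dots> = 0" using assms(2) by simp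
  finally have e: "(q - q') *\<^sub>R cv j = (p' - p) *\<^sub>R cv i" by simp
  have "cv j = (1/(q - q')) *\<^sub>R ((q - q') *\<^sub>R cv j)" using \<open>q \<noteq> q'\<close> by simp
  also have "\<dots> = ((p' - p) / (q - q')) *\<^sub>R cv i" using e by simp
  finally have "cv j = ((p' - p) / (q - q')) *\<^sub>R cv i" .
  moreover have "cv i \<in> range cv - {cv j}" using cv_inj assms(1) by (auto dest: injD)
  ultimately have "cv j \<in> span (range cv - {cv j})"
    by (metis span_base span_scale)
  then have "dependent (range cv)" unfolding dependent_def by blast
  then show False using cv_indep by simp
qed

lemma pq_lemma:
  "wp (concat (replicate k [i,j])) (cv i) = fst (pq (\<alpha> i (cv j)) (\<alpha> j (cv i)) k) *\<^sub>R cv i + snd (pq (\<alpha> i (cv j)) (\<alpha> j (cv i)) k) *\<^sub>R cv j"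
proof (induction k)
  case 0 then show ?case by simp
next
  case (Suc k)
  show ?case using Suc
    by (simp add: Let_def sref_def a_add a_diff a_scale a_ii algebra_simps sc2 sc2')
qed

lemma not_infinite_case:
  assumes "i \<noteq> j" "\<alpha> i (cv j) \<le> 0" "\<alpha> j (cv i) \<le> 0" "\<alpha> i (cv j) * \<alpha> j (cv i) \<ge> 4"
  shows False
proof -
  let ?A = "\<alpha> i (cv j)" and ?B = "\<alpha> j (cv i)"
  let ?f = "\<lambda>k. wp (concat (replicate k [i,j]))"
  have sm: "strict_mono (\<lambda>k. snd (pq ?A ?B k))"
    using pq_inv[OF assms(2-4)] by (intro strict_monoI_Suc) auto
  have "inj ?f"
  proof (rule injI)
    fix k1 k2 assume "?f k1 = ?f k2"
    then have "?f k1 (cv i) = ?f k2 (cv i)" by simp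
    then have "snd (pq ?A ?B k1) = snd (pq ?A ?B k2)"
      using coeff_unique[OF assms(1)] by (simp only: pq_lemma)
    then show "k1 = k2" using sm strict_mono_eq by blast
  qed
  then have "infinite (range ?f)" by (rule range_inj_infinite)
  moreover have "range ?f \<subseteq> weyl_group \<alpha> cv" by (auto simp: weyl_group_def)
  ultimately show False using finW finite_subset by blast
qed

lemma offdiag: "i \<noteq> j \<Longrightarrow> \<alpha> i (cv j) \<in> \<int> \<and> \<alpha> i (cv j) \<le> 0"
  using cd by (simp add: cartan_datum_def)
lemma zero_sym: "\<alpha> i (cv j) = 0 \<longleftrightarrow> \<alpha> j (cv i) = 0"
  using cd by (simp add: cartan_datum_def)

lemma braid_from_vc:
  assumes "i \<noteq> j" "\<And>x. vc i j x (alt i j m) = vc i j x (alt j i m)"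
  shows "wp (alt i j m) = wp (alt j i m)"
proof
  fix x
  have s1: "set (alt i j m) \<subseteq> {i,j}" "set (alt j i m) \<subseteq> {i,j}" using alt_set[of i j m] alt_set[of j i m] by auto
  show "wp (alt i j m) x = wp (alt j i m) x"
    by (simp only: vc_lemma[OF assms(1) s1(1)] vc_lemma[OF assms(1) s1(2)] assms(2))
qed

lemma rank2_cases:
  assumes "i \<noteq> j"
  obtains "\<alpha> i (cv j) = 0" "\<alpha> j (cv i) = 0"
  | "\<alpha> i (cv j) = -1" "\<alpha> j (cv i) = -1"
  | "\<alpha> i (cv j) = -1" "\<alpha> j (cv i) = -2"
  | "\<alpha> i (cv j) = -2" "\<alpha> j (cv i) = -1"
  | "\<alpha> i (cv j) = -1" "\<alpha> j (cv i) = -3"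
  | "\<alpha> i (cv j) = -3" "\<alpha> j (cv i) = -1"
proof -
  obtain a where A: "\<alpha> i (cv j) = of_int a" using offdiag[OF assms] Ints_cases by blast
  obtain b where B: "\<alpha> j (cv i) = of_int b" using offdiag[of j i] assms Ints_cases by metis
  have a0: "a \<le> 0" using offdiag[OF assms] A by simp
  have b0: "b \<le> 0" using offdiag[of j i] assms B by simp
  have ab0: "a = 0 \<longleftrightarrow> b = 0" using zero_sym[of i j] A B by simp
  have "\<not> (of_int a * of_int b \<ge> (4::real))"
    using not_infinite_case[OF assms] A B a0 b0 by auto
  then have "\<not> (a * b \<ge> 4)"
    by (metis of_int_mult of_int_le_iff of_int_numeral)
  then have ab3: "a * b \<le> 3" by simp
  have "(a=0\<and>b=0) \<or> (a=-1\<and>b=-1) \<or> (a=-1\<and>b=-2) \<or> (a=-2\<and>b=-1) \<or> (a=-1\<and>b=-3) \<or> (a=-3\<and>b=-1)"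
  proof (cases "a = 0")
    case True then show ?thesis using ab0 by simp
  next
    case False
    then have a1: "a \<le> -1" "b \<le> -1" using a0 b0 ab0 by auto
    have "a \<ge> -3"
    proof (rule ccontr)
      assume "\<not> a \<ge> -3"
      then have "a \<le> -4" by simp
      then have "(a+4)*(b+1) \<ge> 0" using a1 by (intro mult_nonpos_nonpos) auto
      then show False using ab3 a1 \<open>a \<le> -4\<close> by (simp add: algebra_simps)
    qed
    moreover have "b \<ge> -3"
    proof (rule ccontr)
      assume "\<not> b \<ge> -3"
      then have "b \<le> -4" by simp
      then have "(a+1)*(b+4) \<ge> 0" using a1 by (intro mult_nonpos_nonpos) auto
      then show False using ab3 a1 \<open>b \<le> -4\<close> by (simp add: algebra_simps)
    qed
    ultimately have "a = -1 \<or> a = -2 \<or> a = -3" "b = -1 \<or> b = -2 \<or> b = -3" using a1 by auto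
    then show ?thesis using ab3 by auto
  qed
  then show ?thesis using that A B by auto
qed


lemma rank2_data:
  assumes ij: "i \<noteq> j"
  shows "\<exists>m>0. wp (alt i j m) = wp (alt j i m) \<and>
     (\<forall>k<m. fst (dc i j (0,1) (alt i j k)) \<ge> 0 \<and> snd (dc i j (0,1) (alt i j k)) \<ge> 0)"
proof -
  have ji: "j \<noteq> i" using ij by simp
  show ?thesis
  proof (cases rule: rank2_cases[OF ij])
    case 1
    show ?thesis
      by (rule exI[of _ 2], intro conjI braid_from_vc ij)
         (simp_all add: numeral_eq_Suc Let_def ij ji 1 All_less_Suc)
  next
    case 2
    show ?thesis
      by (rule exI[of _ 3], intro conjI braid_from_vc ij)
         (simp_all add: numeral_eq_Suc Let_def ij ji 2 All_less_Suc algebra_simps)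
  next
    case 3
    show ?thesis
      by (rule exI[of _ 4], intro conjI braid_from_vc ij)
         (simp_all add: numeral_eq_Suc Let_def ij ji 3 All_less_Suc algebra_simps)
  next
    case 4
    show ?thesis
      by (rule exI[of _ 4], intro conjI braid_from_vc ij)
         (simp_all add: numeral_eq_Suc Let_def ij ji 4 All_less_Suc algebra_simps)
  next
    case 5
    show ?thesis
      by (rule exI[of _ 6], intro conjI braid_from_vc ij)
         (simp_all add: numeral_eq_Suc Let_def ij ji 5 All_less_Suc algebra_simps)
  next
    case 6
    show ?thesis
      by (rule exI[of _ 6], intro conjI braid_from_vc ij)
         (simp_all add: numeral_eq_Suc Let_def ij ji 6 All_less_Suc algebra_simps)
  qed
qed

lemma sj_comp: "s j \<circ> (s j \<circ> f) = f" by (rule ext) simp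

lemma wp_cancel_pair: "wp (xs @ [a,a] @ ys) = wp (xs @ ys)"
  by (auto simp: wp_append)

lemma rank2:
  assumes ij: "i \<noteq> j" and xs: "set xs \<subseteq> {i,j}"
    and min1: "\<And>zs. set zs \<subseteq> {i,j} \<Longrightarrow> wp zs = wp xs \<Longrightarrow> length xs \<le> length zs"
    and min2: "\<And>zs. set zs \<subseteq> {i,j} \<Longrightarrow> wp zs = s j \<circ> wp xs \<Longrightarrow> length xs \<le> length zs"
  shows "\<exists>a b. 0 \<le> a \<and> 0 \<le> b \<and> (\<forall>x. \<alpha> j (wp xs x) = b * \<alpha> i x + a * \<alpha> j x)"
proof -
  obtain m where m0: "m > 0" and braid: "wp (alt i j m) = wp (alt j i m)"
    and pos: "\<forall>k<m. fst (dc i j (0,1) (alt i j k)) \<ge> 0 \<and> snd (dc i j (0,1) (alt i j k)) \<ge> 0"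
    using rank2_data[OF ij] by blast
  have altx: "\<forall>k. Suc k < length xs \<longrightarrow> xs!k \<noteq> xs!Suc k"
  proof (intro allI impI notI)
    fix k assume k: "Suc k < length xs" and eq: "xs!k = xs!Suc k"
    define zs where "zs = take k xs @ drop (Suc (Suc k)) xs"
    have xs_eq: "xs = take k xs @ [xs!k, xs!Suc k] @ drop (Suc (Suc k)) xs"
      using k by (simp add: Cons_nth_drop_Suc)
    have "wp xs = wp (take k xs @ [xs!k, xs!Suc k] @ drop (Suc (Suc k)) xs)"
      using xs_eq by (rule arg_cong)
    also have "\<dots> = wp zs" unfolding zs_def using eq wp_cancel_pair by simp
    finally have "wp xs = wp zs" .
    moreover have "set zs \<subseteq> {i,j}" using xs set_drop_subset[of "Suc (Suc k)" xs] set_take_subset[of k xs] unfolding zs_def by auto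
    moreover have "length zs < length xs" using k unfolding zs_def by simp
    ultimately show False using min1 by fastforce
  qed
  have hdx: "xs \<noteq> [] \<longrightarrow> hd xs = i"
  proof (rule impI, rule ccontr)
    assume ne: "xs \<noteq> []" and "hd xs \<noteq> i"
    then have h: "hd xs = j" using xs by (auto dest: hd_in_set)
    have "xs = j # tl xs" using ne h by (cases xs) auto
    then have "wp xs = s j \<circ> wp (tl xs)" by (metis wp_Cons)
    then have "wp (tl xs) = s j \<circ> wp xs" by (simp add: sj_comp)
    moreover have "set (tl xs) \<subseteq> {i,j}" using xs ne by (cases xs) auto
    ultimately show False using min2[of "tl xs"] ne by (cases xs) auto
  qed
  have xa: "xs = alt i j (length xs)" by (rule alt_form[OF xs ij altx hdx])
  have lm: "length xs < m"
  proof (rule ccontr)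
    assume "\<not> length xs < m"
    then have le: "m \<le> length xs" by simp
    define zs where "zs = alt j i m @ drop m xs"
    have tk: "take m xs = alt i j m" by (subst xa) (simp add: take_alt le)
    have "alt i j m @ drop m xs = xs" using tk append_take_drop_id[of m xs] by simp
    then have "wp zs = wp xs" unfolding zs_def by (metis wp_append braid)
    moreover obtain zt where zt: "zs = j # zt" using m0 unfolding zs_def by (cases m) auto
    ultimately have "wp xs = s j \<circ> wp zt" by simp
    then have "wp zt = s j \<circ> wp xs" by (simp add: sj_comp)
    moreover have "set zt \<subseteq> {i,j}"
    proof -
      have "set zs \<subseteq> {i,j}" using alt_set[of j i m] xs set_drop_subset[of m xs] unfolding zs_def by auto
      then show ?thesis using zt by auto
    qed
    moreover have "length zt < length xs"
    proof -
      have "length zs = length xs" using le unfolding zs_def by simp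
      then show ?thesis using zt by simp
    qed
    ultimately show False using min2 by fastforce
  qed
  have d: "\<forall>x. \<alpha> j (wp xs x) = fst (dc i j (0,1) xs) * \<alpha> i x + snd (dc i j (0,1) xs) * \<alpha> j x"
    using dc_lemma[OF ij xs, where p=0 and q=1] by simp
  have xa2: "dc i j (0,1) xs = dc i j (0,1) (alt i j (length xs))" using xa by (rule arg_cong)
  have "fst (dc i j (0,1) xs) \<ge> 0 \<and> snd (dc i j (0,1) xs) \<ge> 0"
    unfolding xa2 using pos lm by blast
  then show ?thesis using d by blast
qed

lemma wl_word: "wp zs = wp ws \<Longrightarrow> wl (wp ws) \<le> length zs"
  using wl_le[of zs] by simp

lemma tits:
  "wl (wp ws) = n \<Longrightarrow> n \<le> wl (wp (j # ws)) \<Longrightarrow>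
   \<exists>c. (\<forall>i. 0 \<le> c i) \<and> (\<forall>x. \<alpha> j (wp ws x) = (\<Sum>i\<in>UNIV. c i * \<alpha> i x))"
proof (induction n arbitrary: ws j rule: less_induct)
  case (less n ws j)
  obtain ws0 where ws0: "length ws0 = n" "wp ws0 = wp ws" using wl_ex[of ws] less.prems(1) by auto
  have lower: "\<And>zs. wp zs = wp ws \<Longrightarrow> n \<le> length zs" using wl_word less.prems(1) by blast
  show ?case
  proof (cases ws0)
    case Nil
    then have "wp ws = id" using ws0 by simp
    then show ?thesis
      by (intro exI[of _ "\<lambda>i. if i = j then 1 else 0"]) (simp add: if_distrib[where f="\<lambda>c. c * _"] cong: if_cong)
  next
    case (Cons i ws1)
    have ij: "i \<noteq> j"
    proof
      assume "i = j"
      then have "wp (j # ws) = wp ws1" using ws0 Cons by (metis sj_comp wp_Cons)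
      then have "wl (wp (j # ws)) \<le> length ws1" using wl_le[of ws1] by simp
      then have "n \<le> length ws1" using less.prems(2) by linarith
      then show False using ws0 Cons by simp
    qed
    define Ap where "Ap xs ys \<longleftrightarrow> set xs \<subseteq> {i,j} \<and> wp xs \<circ> wp ys = wp ws \<and> length xs + length ys = n" for xs ys
    have A1: "Ap [i] ws1" unfolding Ap_def using ws0 Cons by auto
    define P where "P k \<longleftrightarrow> (\<exists>xs ys. Ap xs ys \<and> length ys = k)" for k
    have P1: "P (length ws1)" using A1 unfolding P_def by blast
    define k0 where "k0 = (LEAST k. P k)"
    have "P k0" unfolding k0_def using P1 by (rule LeastI)
    then obtain xs ys where A: "Ap xs ys" and yk: "length ys = k0" unfolding P_def by blast
    have minA: "\<And>xs' ys'. Ap xs' ys' \<Longrightarrow> length ys \<le> length ys'"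
      unfolding yk k0_def P_def by (rule Least_le) blast
    have k0n: "length ys < n" using minA[OF A1] ws0 Cons by simp
    have xsI: "set xs \<subseteq> {i,j}" and wxy: "wp xs \<circ> wp ys = wp ws" and len: "length xs + length ys = n"
      using A unfolding Ap_def by auto
    have wly: "wl (wp ys) = length ys"
    proof -
      obtain ys' where ys': "length ys' = wl (wp ys)" "wp ys' = wp ys" using wl_ex by blast
      have "wp (xs @ ys') = wp ws" using wxy ys' by (simp add: wp_append)
      then have "n \<le> length xs + length ys'" using lower by fastforce
      then show ?thesis using ys' wl_le[of ys] len by simp
    qed
    have step: "\<exists>c. (\<forall>i. 0 \<le> c i) \<and> (\<forall>x. \<alpha> l (wp ys x) = (\<Sum>i\<in>UNIV. c i * \<alpha> i x))"
      if l: "l \<in> {i,j}" for l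
    proof -
      have "length ys \<le> wl (wp (l # ys))"
      proof (rule ccontr)
        assume "\<not> length ys \<le> wl (wp (l # ys))"
        obtain zs where zs: "length zs = wl (wp (l # ys))" "wp zs = wp (l # ys)" using wl_ex by blast
        have zl: "wp zs = s l \<circ> wp ys" using zs(2) by simp
        have "wp (xs @ [l]) \<circ> wp zs = wp xs \<circ> (s l \<circ> (s l \<circ> wp ys))" unfolding zl by (simp add: wp_append comp_assoc)
        also have "\<dots> = wp ws" using wxy by (simp add: sj_comp)
        finally have "wp (xs @ [l]) \<circ> wp zs = wp ws" .
        then have w: "wp ((xs @ [l]) @ zs) = wp ws" by (simp add: wp_append comp_assoc)
        have "Ap (xs @ [l]) zs"
          unfolding Ap_def using lower[OF w] xsI l len \<open>\<not> length ys \<le> wl (wp (l # ys))\<close> zs(1)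
            \<open>wp (xs @ [l]) \<circ> wp zs = wp ws\<close> by auto
        then show False using minA \<open>\<not> length ys \<le> wl (wp (l # ys))\<close> zs(1) by fastforce
      qed
      then show ?thesis using less.IH[OF k0n[unfolded yk[symmetric]]] wly yk by blast
    qed
    obtain ci where ci: "\<forall>i. 0 \<le> ci i" "\<forall>x. \<alpha> i (wp ys x) = (\<Sum>k\<in>UNIV. ci k * \<alpha> k x)"
      using step[of i] by blast
    obtain cj where cj: "\<forall>i. 0 \<le> cj i" "\<forall>x. \<alpha> j (wp ys x) = (\<Sum>k\<in>UNIV. cj k * \<alpha> k x)"
      using step[of j] by blast
    have min1: "length xs \<le> length zs" if "set zs \<subseteq> {i,j}" "wp zs = wp xs" for zs
    proof -
      have "wp (zs @ ys) = wp ws" using that wxy by (simp add: wp_append)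
      then show ?thesis using lower len by fastforce
    qed
    have min2: "length xs \<le> length zs" if "set zs \<subseteq> {i,j}" "wp zs = s j \<circ> wp xs" for zs
    proof -
      have "wp (zs @ ys) = wp (j # ws)" using that wxy by (simp add: wp_append comp_assoc)
      then have "wl (wp (j # ws)) \<le> length zs + length ys" using wl_word by fastforce
      then show ?thesis using less.prems(2) len by linarith
    qed
    obtain a b where ab: "0 \<le> a" "0 \<le> b" "\<forall>x. \<alpha> j (wp xs x) = b * \<alpha> i x + a * \<alpha> j x"
      using rank2[OF ij xsI min1 min2] by blast
    show ?thesis
    proof (intro exI[of _ "\<lambda>k. b * ci k + a * cj k"] conjI allI)
      fix k show "0 \<le> b * ci k + a * cj k" using ab ci cj by simp
    next
      fix x
      have "\<alpha> j (wp ws x) = \<alpha> j (wp xs (wp ys x))" using wxy by (metis comp_apply)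
      also have "\<dots> = b * \<alpha> i (wp ys x) + a * \<alpha> j (wp ys x)" using ab by simp
      also have "\<dots> = (\<Sum>k\<in>UNIV. (b * ci k + a * cj k) * \<alpha> k x)"
        using ci cj by (simp add: sum_distrib_left sum.distrib algebra_simps)
      finally show "\<alpha> j (wp ws x) = (\<Sum>k\<in>UNIV. (b * ci k + a * cj k) * \<alpha> k x)" .
    qed
  qed
qed

lemma rho_ex: "\<exists>\<rho>. \<forall>i. \<alpha> i \<rho> = 1"
proof (rule ccontr)
  assume nex: "\<not> (\<exists>\<rho>. \<forall>i. \<alpha> i \<rho> = 1)"
  define L where "L = (\<lambda>x. (\<chi> i. \<alpha> i x) :: real^'i)"
  have linL: "linear L"
    by (rule linearI) (simp_all add: L_def vec_eq_iff a_add a_scale)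
  have sub: "subspace (range L)" using linear_subspace_image[OF linL subspace_UNIV] by simp
  have "(\<chi> i. 1) \<notin> range L"
  proof
    assume "(\<chi> i. 1) \<in> range L"
    then obtain x where "L x = (\<chi> i. 1)" by auto
    then have "\<forall>i. \<alpha> i x = 1" by (simp add: L_def vec_eq_iff)
    then show False using nex by blast
  qed
  moreover have sp: "span (range L) = range L" using span_eq_iff[THEN iffD2, OF sub] .
  ultimately have "span (range L) \<subset> span (UNIV :: (real^'i) set)"
    unfolding sp span_UNIV by auto
  then obtain c :: "real^'i" where c: "c \<noteq> 0" "\<And>y. y \<in> span (range L) \<Longrightarrow> orthogonal c y"
    by (rule orthogonal_to_subspace_exists_gen) blast
  have "\<forall>x. (\<Sum>i\<in>UNIV. c$i * \<alpha> i x) = 0"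
  proof
    fix x
    have "orthogonal c (L x)" using c(2) span_base[of "L x" "range L"] by auto
    then show "(\<Sum>i\<in>UNIV. c$i * \<alpha> i x) = 0" by (simp add: orthogonal_def inner_vec_def L_def)
  qed
  then have "\<forall>i. c$i = 0" using cd unfolding cartan_datum_def by blast
  then show False using c(1) by (simp add: vec_eq_iff)
qed

lemma reduced_prefix:
  assumes "length ws = wl (wp ws)" "k \<le> length ws"
  shows "wl (wp (take k ws)) = k"
proof -
  obtain zs where zs: "length zs = wl (wp (take k ws))" "wp zs = wp (take k ws)" using wl_ex by blast
  have "wp (zs @ drop k ws) = wp ws" using zs(2) by (metis append_take_drop_id wp_append)
  then have "length ws \<le> length zs + (length ws - k)" using wl_word[of "zs @ drop k ws" ws] assms(1) by simp
  then show ?thesis using zs(1) wl_le[of "take k ws"] assms(2) by simp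
qed

lemma key_pos:
  assumes red: "length ws = wl (wp ws)" and k: "k < length ws" and rho: "\<forall>i. \<alpha> i \<rho> = 1"
  shows "0 < \<alpha> (ws!k) (wp (rev (take k ws)) \<rho>)"
proof -
  let ?ys = "take k ws" and ?j = "ws!k"
  have r1: "wl (wp (take (Suc k) ws)) = Suc k" using reduced_prefix[OF red] k by simp
  have r0: "wl (wp (rev ?ys)) \<le> k" using wl_rev[of ?ys] wl_le[of ?ys] k by simp
  have "?j # rev ?ys = rev (take (Suc k) ws)" using k by (simp add: take_Suc_conv_app_nth)
  then have r2: "wl (wp (?j # rev ?ys)) = Suc k" using wl_rev[of "take (Suc k) ws"] r1 by simp
  obtain c where c: "\<forall>i. 0 \<le> c i" "\<forall>x. \<alpha> ?j (wp (rev ?ys) x) = (\<Sum>i\<in>UNIV. c i * \<alpha> i x)"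
    using tits[OF refl, of "rev ?ys" ?j] r0 r2 by auto
  have val: "\<alpha> ?j (wp (rev ?ys) \<rho>) = (\<Sum>i\<in>UNIV. c i)" using c(2) rho by simp
  have "(\<Sum>i\<in>UNIV. c i) \<noteq> 0"
  proof
    assume "(\<Sum>i\<in>UNIV. c i) = 0"
    then have "\<forall>i. c i = 0" using c(1) sum_nonneg_eq_0_iff[of UNIV c] by auto
    have "\<alpha> ?j (wp (rev ?ys) (wp ?ys (cv ?j))) = (\<Sum>i\<in>UNIV. c i * \<alpha> i (wp ?ys (cv ?j)))"
      using c(2) by blast
    also have "\<dots> = 0" using \<open>\<forall>i. c i = 0\<close> by simp
    finally have "\<alpha> ?j (wp (rev ?ys) (wp ?ys (cv ?j))) = 0" .
    moreover have "wp (rev ?ys) (wp ?ys (cv ?j)) = cv ?j" by (rule wp_rev_inv)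
    ultimately show False using a_ii[of ?j] by simp
  qed
  moreover have "(\<Sum>i\<in>UNIV. c i) \<ge> 0" using c(1) by (simp add: sum_nonneg)
  ultimately show ?thesis using val by simp
qed

end


context cdat
begin

lemma epath_snoc: "epath \<alpha> cv T (xs @ [j]) p = eminf \<alpha> cv T j (epath \<alpha> cv T xs p)"
  by (simp add: epath_def)

lemma path_inv:
  assumes T: "0 < T" and red: "length ws = wl (wp ws)" and rho: "\<forall>i. \<alpha> i \<rho> = 1"
    and cpi: "continuous_on {0..T} \<pi>"
  shows "k \<le> length ws \<Longrightarrow> continuous_on {0..<T} (epath \<alpha> cv T (take k ws) \<pi>) \<and>
    (\<exists>B. \<forall>t\<in>{0..<T}. norm (epath \<alpha> cv T (take k ws) \<pi> t - ln (T - t) *\<^sub>R (\<rho> - wp (rev (take k ws)) \<rho>)) \<le> B)"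
proof (induction k)
  case 0
  have e0: "epath \<alpha> cv T [] \<pi> = \<pi>" by (simp add: epath_def)
  have "compact (\<pi> ` {0..T})" by (rule compact_continuous_image[OF cpi]) simp
  then obtain B where B: "\<forall>x\<in>\<pi> ` {0..T}. norm x \<le> B" using compact_imp_bounded bounded_iff by metis
  have c: "continuous_on {0..<T} \<pi>" by (rule continuous_on_subset[OF cpi]) auto
  have "\<forall>t\<in>{0..<T}. norm (\<pi> t - ln (T - t) *\<^sub>R (\<rho> - wp (rev (take 0 ws)) \<rho>)) \<le> B"
    using B by simp
  then show ?case using e0 c by auto
next
  case (Suc k)
  then have k: "k < length ws" by simp
  obtain B where B: "\<forall>t\<in>{0..<T}. norm (epath \<alpha> cv T (take k ws) \<pi> t - ln (T - t) *\<^sub>R (\<rho> - wp (rev (take k ws)) \<rho>)) \<le> B"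
    and c: "continuous_on {0..<T} (epath \<alpha> cv T (take k ws) \<pi>)" using Suc.IH k by auto
  define j where "j = ws ! k"
  define u where "u = wp (rev (take k ws))"
  have kp: "0 < \<alpha> j (u \<rho>)" unfolding j_def u_def by (rule key_pos[OF red k rho])
  have a: "\<alpha> j (\<rho> - u \<rho>) < 1" using kp rho by (simp add: a_diff)
  obtain B' where st: "continuous_on {0..<T} (eminf \<alpha> cv T j (epath \<alpha> cv T (take k ws) \<pi>))"
    "\<forall>t\<in>{0..<T}. norm (eminf \<alpha> cv T j (epath \<alpha> cv T (take k ws) \<pi>) t - ln (T - t) *\<^sub>R ((\<rho> - u \<rho>) + (1 - \<alpha> j (\<rho> - u \<rho>)) *\<^sub>R cv j)) \<le> B'"
    using step_path[where \<alpha>=\<alpha> and j=j and cv=cv, OF T lin c B[folded u_def] a] by blast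
  have tk: "take (Suc k) ws = take k ws @ [j]" unfolding j_def using k by (simp add: take_Suc_conv_app_nth)
  have ep: "epath \<alpha> cv T (take (Suc k) ws) \<pi> = eminf \<alpha> cv T j (epath \<alpha> cv T (take k ws) \<pi>)"
    unfolding tk epath_snoc ..
  have "wp (rev (take (Suc k) ws)) \<rho> = s j (u \<rho>)" unfolding tk u_def by simp
  then have vec: "(\<rho> - u \<rho>) + (1 - \<alpha> j (\<rho> - u \<rho>)) *\<^sub>R cv j = \<rho> - wp (rev (take (Suc k) ws)) \<rho>"
    using rho by (simp add: sref_def a_diff algebra_simps)
  show ?case using st unfolding ep vec by blast
qed

lemma dk_info:
  assumes T: "0 < T" and red: "length ws = wl (wp ws)" and rho: "\<forall>i. \<alpha> i \<rho> = 1"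
    and cpi: "continuous_on {0..T} \<pi>" and k: "k < length ws"
  shows "\<exists>D>0. Dint \<alpha> T (ws!k) (epath \<alpha> cv T (take k ws) \<pi>) = ennreal D \<and>
    (\<forall>t\<in>{0..<T}. integral {0..t} (\<lambda>s. exp (- \<alpha> (ws!k) (epath \<alpha> cv T (take k ws) \<pi> s))) < D) \<and>
    continuous_on {0..<T} (epath \<alpha> cv T (take k ws) \<pi>)"
proof -
  obtain B where B: "\<forall>t\<in>{0..<T}. norm (epath \<alpha> cv T (take k ws) \<pi> t - ln (T - t) *\<^sub>R (\<rho> - wp (rev (take k ws)) \<rho>)) \<le> B"
    and c: "continuous_on {0..<T} (epath \<alpha> cv T (take k ws) \<pi>)" using path_inv[OF T red rho cpi, of k] k by auto
  have kp: "0 < \<alpha> (ws!k) (wp (rev (take k ws)) \<rho>)" by (rule key_pos[OF red k rho])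
  have a: "\<alpha> (ws!k) (\<rho> - wp (rev (take k ws)) \<rho>) < 1" using kp rho by (simp add: a_diff)
  show ?thesis using step_path[where \<alpha>=\<alpha> and j="ws!k" and cv=cv, OF T lin c B a] c by blast
qed

end

theorem mainTheorem13:
  fixes \<alpha> :: "'i::finite \<Rightarrow> 'a::euclidean_space \<Rightarrow> real" and cv :: "'i \<Rightarrow> 'a"
    and T :: real and "is" :: "'i list"
  assumes "cartan_datum \<alpha> cv"
    and "finite (weyl_group \<alpha> cv)"
    and "T > 0"
    and "reduced_word_w0 \<alpha> cv is"
  shows "(\<forall>\<pi>::real \<Rightarrow> 'a. continuous_on {0..T} \<pi> \<and> \<pi> 0 = 0 \<longrightarrow>
            (\<forall>k<length is. 0 < Dk \<alpha> cv T is \<pi> k \<and> Dk \<alpha> cv T is \<pi> k < \<infinity>) \<and>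
            (\<forall>x\<in>set (rhoL \<alpha> cv T is \<pi>). x > 0))
       \<and> (\<forall>\<pi> \<pi>'::real \<Rightarrow> 'a.
            continuous_on {0..T} \<pi> \<and> \<pi> 0 = 0 \<and> continuous_on {0..T} \<pi>' \<and> \<pi>' 0 = 0 \<and>
            rhoL \<alpha> cv T is \<pi> = rhoL \<alpha> cv T is \<pi>' \<and>
            (\<forall>t\<in>{0..<T}. epath \<alpha> cv T is \<pi> t = epath \<alpha> cv T is \<pi>' t)
            \<longrightarrow> (\<forall>t\<in>{0..T}. \<pi> t = \<pi>' t))"
proof -
  interpret cdat \<alpha> cv using assms(1,2) by unfold_locales
  obtain \<rho> where rho: "\<forall>i. \<alpha> i \<rho> = 1" using rho_ex by blast
  have red: "length is = wl (wp is)" using assms(4) unfolding reduced_word_w0_def by blast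
  have T: "0 < T" using assms(3) .
  have rhoL_nth: "rhoL \<alpha> cv T is p ! k = 1 / enn2real (Dk \<alpha> cv T is p k)" if "k < length is" for p k
    using that unfolding rhoL_def by simp
  have part1: "(\<forall>k<length is. 0 < Dk \<alpha> cv T is \<pi> k \<and> Dk \<alpha> cv T is \<pi> k < \<infinity>) \<and>
            (\<forall>x\<in>set (rhoL \<alpha> cv T is \<pi>). x > 0)" if cpi: "continuous_on {0..T} \<pi>" for \<pi>
  proof
    show "\<forall>k<length is. 0 < Dk \<alpha> cv T is \<pi> k \<and> Dk \<alpha> cv T is \<pi> k < \<infinity>"
    proof (intro allI impI)
      fix k assume k: "k < length is"
      obtain D where "D > 0" "Dint \<alpha> T (is!k) (epath \<alpha> cv T (take k is) \<pi>) = ennreal D"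
        using dk_info[OF T red rho cpi k] by blast
      then show "0 < Dk \<alpha> cv T is \<pi> k \<and> Dk \<alpha> cv T is \<pi> k < \<infinity>" unfolding Dk_def by simp
    qed
    show "\<forall>x\<in>set (rhoL \<alpha> cv T is \<pi>). x > 0"
    proof
      fix x assume "x \<in> set (rhoL \<alpha> cv T is \<pi>)"
      then obtain k where k: "k < length is" and x: "x = 1 / enn2real (Dk \<alpha> cv T is \<pi> k)"
        unfolding rhoL_def by auto
      obtain D where "D > 0" "Dint \<alpha> T (is!k) (epath \<alpha> cv T (take k is) \<pi>) = ennreal D"
        using dk_info[OF T red rho cpi k] by blast
      then show "x > 0" unfolding x Dk_def by simp
    qed
  qed
  have part2: "\<forall>t\<in>{0..T}. \<pi> t = \<pi>' t"
    if cpi: "continuous_on {0..T} \<pi>" and cpi': "continuous_on {0..T} \<pi>'"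
      and rh: "rhoL \<alpha> cv T is \<pi> = rhoL \<alpha> cv T is \<pi>'"
      and ee: "\<forall>t\<in>{0..<T}. epath \<alpha> cv T is \<pi> t = epath \<alpha> cv T is \<pi>' t" for \<pi> \<pi>'
  proof -
    have down: "\<forall>t\<in>{0..<T}. epath \<alpha> cv T (take (length is - n) is) \<pi> t = epath \<alpha> cv T (take (length is - n) is) \<pi>' t"
      if "n \<le> length is" for n
      using that
    proof (induction n)
      case 0 then show ?case using ee by simp
    next
      case (Suc n)
      define m where "m = length is - Suc n"
      have m: "m < length is" and m1: "length is - n = Suc m" using Suc.prems unfolding m_def by auto
      have IH: "\<forall>t\<in>{0..<T}. epath \<alpha> cv T (take (Suc m) is) \<pi> t = epath \<alpha> cv T (take (Suc m) is) \<pi>' t"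
        using Suc.IH Suc.prems m1 by simp
      have tk: "take (Suc m) is = take m is @ [is!m]" using m by (simp add: take_Suc_conv_app_nth)
      obtain D where D: "D > 0" "Dint \<alpha> T (is!m) (epath \<alpha> cv T (take m is) \<pi>) = ennreal D"
        "\<forall>t\<in>{0..<T}. integral {0..t} (\<lambda>s. exp (- \<alpha> (is!m) (epath \<alpha> cv T (take m is) \<pi> s))) < D"
        "continuous_on {0..<T} (epath \<alpha> cv T (take m is) \<pi>)"
        using dk_info[OF T red rho cpi m] by blast
      obtain D' where D': "D' > 0" "Dint \<alpha> T (is!m) (epath \<alpha> cv T (take m is) \<pi>') = ennreal D'"
        "\<forall>t\<in>{0..<T}. integral {0..t} (\<lambda>s. exp (- \<alpha> (is!m) (epath \<alpha> cv T (take m is) \<pi>' s))) < D'"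
        "continuous_on {0..<T} (epath \<alpha> cv T (take m is) \<pi>')"
        using dk_info[OF T red rho cpi' m] by blast
      have "1 / D = 1 / D'"
        using rhoL_nth[OF m, of \<pi>] rhoL_nth[OF m, of \<pi>'] rh D(1,2) D'(1,2) unfolding Dk_def by simp
      then have DD: "D' = D" using D(1) D'(1) by simp
      have "\<forall>t\<in>{0..<T}. epath \<alpha> cv T (take m is) \<pi> t = epath \<alpha> cv T (take m is) \<pi>' t"
      proof (rule inv_step[where \<alpha>=\<alpha> and j="is!m" and cv=cv, OF lin a_ii D(4) D'(4) D(1) D(2)])
        show "Dint \<alpha> T (is!m) (epath \<alpha> cv T (take m is) \<pi>') = ennreal D" using D'(2) DD by simp
        show "\<forall>t\<in>{0..<T}. integral {0..t} (\<lambda>s. exp (- \<alpha> (is!m) (epath \<alpha> cv T (take m is) \<pi> s))) < D" by (rule D(3))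
        show "\<forall>t\<in>{0..<T}. integral {0..t} (\<lambda>s. exp (- \<alpha> (is!m) (epath \<alpha> cv T (take m is) \<pi>' s))) < D" using D'(3) DD by simp
        show "\<forall>t\<in>{0..<T}. eminf \<alpha> cv T (is!m) (epath \<alpha> cv T (take m is) \<pi>) t = eminf \<alpha> cv T (is!m) (epath \<alpha> cv T (take m is) \<pi>') t"
          using IH unfolding tk epath_snoc .
      qed
      then show ?case unfolding m_def by simp
    qed
    have eq0: "\<forall>t\<in>{0..<T}. \<pi> t = \<pi>' t" using down[of "length is"] by (simp add: epath_def)
    show ?thesis
    proof
      fix t assume t: "t \<in> {0..T}"
      show "\<pi> t = \<pi>' t"
      proof (cases "t < T")
        case True then show ?thesis using eq0 t by auto
      next
        case False
        then have tT: "t = T" using t by auto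
        have l1: "(\<pi> \<longlongrightarrow> \<pi> T) (at_left T)" by (rule continuous_on_Icc_at_leftD[OF cpi T])
        have l2: "(\<pi>' \<longlongrightarrow> \<pi>' T) (at_left T)" by (rule continuous_on_Icc_at_leftD[OF cpi' T])
        have ev: "eventually (\<lambda>x. \<pi>' x = \<pi> x) (at_left T)"
        proof -
          have "eventually (\<lambda>x. x \<in> {0<..<T}) (at_left T)" using T by (rule eventually_at_left_real)
          then show ?thesis by eventually_elim (use eq0 in auto)
        qed
        have "(\<pi> \<longlongrightarrow> \<pi>' T) (at_left T)" using tendsto_cong[OF ev] l2 by blast
        then have "\<pi> T = \<pi>' T" using tendsto_unique[OF _ l1] by (simp add: trivial_limit_at_left_real)
        then show ?thesis using tT by simp
      qed
    qed
  qed
  show ?thesis using part1 part2 by blast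
qed

end
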